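(* Let $n\ge1$, let $t_1,\dots,t_{n+1}$ be real nodes in strictly increasing order (or in strictly decreasing order), and let $f$ be a real function such that the entries of the vector $(f(t_1),\dots,f(t_{n+1}))$ can be computed to high relative accuracy and have alternating signs. Then the divided differences $[t_i,\dots,t_{i+k}]f$, $k=0,\dots,n$, $i=1,\dots,n+1-k$, can be computed to high relative accuracy using the recursion $$[t_i]f=f(t_i),\qquad [t_i,\dots,t_{i+k}]f=\frac{[t_{i+1},\dots,t_{i+k}]f-[t_i,\dots,t_{i+k-1}]f}{t_{i+k}-t_i}.$$
   Context: A real quantity is said to be computed to high relative accuracy (HRA) in a floating-point arithmetic with unit roundoff $u$ if the relative error of the computed value is bounded by $Cu$, where $C>0$ is a constant independent of the arithmetic precision. *)

theory Defs
  imports Main Complex_Main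
begin

text \<open>Standard model of floating-point arithmetic with unit roundoff u:
  the computed result of the operation op applied to a, b equals the exact
  result times (1 + delta) with abs delta bounded by u.\<close>
definition std_op :: "real \<Rightarrow> (real \<Rightarrow> real \<Rightarrow> real) \<Rightarrow> (real \<Rightarrow> real \<Rightarrow> real) \<Rightarrow> bool" where
  "std_op u op fl \<longleftrightarrow> (\<forall>a b. \<exists>\<delta>. \<bar>\<delta>\<bar> \<le> u \<and> fl a b = op a b * (1 + \<delta>))"

fun divdiff :: "(nat \<Rightarrow> real) \<Rightarrow> (nat \<Rightarrow> real) \<Rightarrow> nat \<Rightarrow> nat \<Rightarrow> real" where
  "divdiff t y 0 i = y i"
| "divdiff t y (Suc k) i =
     (divdiff t y k (Suc i) - divdiff t y k i) / (t (i + Suc k) - t i)"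

fun fl_divdiff :: "(real \<Rightarrow> real \<Rightarrow> real) \<Rightarrow> (real \<Rightarrow> real \<Rightarrow> real) \<Rightarrow>
    (nat \<Rightarrow> real) \<Rightarrow> (nat \<Rightarrow> real) \<Rightarrow> nat \<Rightarrow> nat \<Rightarrow> real" where
  "fl_divdiff fsub fdiv t yv 0 i = yv i"
| "fl_divdiff fsub fdiv t yv (Suc k) i =
     fdiv (fsub (fl_divdiff fsub fdiv t yv k (Suc i)) (fl_divdiff fsub fdiv t yv k i))
          (fsub (t (i + Suc k)) (t i))"

end

theory Submission
  imports Defs
begin

lemma opp_abs: "(A::real) * B < 0 \<Longrightarrow> \<bar>A - B\<bar> = \<bar>A\<bar> + \<bar>B\<bar>"
  by (cases "A \<ge> 0") (auto simp: mult_less_0_iff)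

lemma opp_chain: "(a::real) * b < 0 \<Longrightarrow> b * c < 0 \<Longrightarrow> (b - a) * (c - b) < 0"
  by (cases "b \<ge> 0") (auto simp: mult_less_0_iff)

lemma sub_err:
  fixes a b A B e :: real
  assumes "A * B < 0" "\<bar>a - A\<bar> \<le> e * \<bar>A\<bar>" "\<bar>b - B\<bar> \<le> e * \<bar>B\<bar>"
  shows "\<bar>(a - b) - (A - B)\<bar> \<le> e * \<bar>A - B\<bar>"
proof -
  have "\<bar>(a - b) - (A - B)\<bar> \<le> \<bar>a - A\<bar> + \<bar>b - B\<bar>" by simp
  also have "\<dots> \<le> e * (\<bar>A\<bar> + \<bar>B\<bar>)" using assms by (simp add: distrib_left)
  finally show ?thesis using opp_abs[OF assms(1)] by simp
qed

lemma round_err: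
  fixes xh x r u d :: real
  assumes "\<bar>xh - x\<bar> \<le> r * \<bar>x\<bar>" "\<bar>d\<bar> \<le> u"
  shows "\<bar>xh * (1 + d) - x\<bar> \<le> (r * (1 + u) + u) * \<bar>x\<bar>"
proof -
  have e: "xh * (1 + d) - x = (xh - x) * (1 + d) + x * d" by algebra
  have "\<bar>(xh - x) * (1 + d)\<bar> \<le> r * \<bar>x\<bar> * (1 + u)"
    unfolding abs_mult
    by (rule mult_mono) (use assms in auto)
  moreover have "\<bar>x * d\<bar> \<le> \<bar>x\<bar> * u" unfolding abs_mult
    by (rule mult_left_mono) (use assms in auto)
  ultimately show ?thesis unfolding e
    by (smt (verit) abs_triangle_ineq distrib_left mult.commute mult.assoc)
qed

lemma div_err:
  fixes s N D r u d :: real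
  assumes "\<bar>s - N\<bar> \<le> r * \<bar>N\<bar>" "D \<noteq> 0" "\<bar>d\<bar> \<le> u" "u \<le> 1/2"
  shows "\<bar>s / (D * (1 + d)) - N / D\<bar> \<le> 2 * (r + u) * \<bar>N / D\<bar>"
proof -
  have d1: "1 + d \<ge> 1/2" using assms by linarith
  have e: "s / (D * (1 + d)) - N / D = (s - N * (1 + d)) / (D * (1 + d))"
  proof -
    have "1 + d \<noteq> 0" using d1 by linarith
    then have "N / D = N * (1 + d) / (D * (1 + d))" by simp
    then show ?thesis by (simp add: diff_divide_distrib)
  qed
  have num: "\<bar>s - N * (1 + d)\<bar> \<le> (r + u) * \<bar>N\<bar>"
  proof -
    have "s - N * (1 + d) = (s - N) - N * d" by algebra
    then have "\<bar>s - N * (1 + d)\<bar> \<le> \<bar>s - N\<bar> + \<bar>N * d\<bar>" by (smt (verit) abs_triangle_ineq4)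
    moreover have "\<bar>N * d\<bar> \<le> \<bar>N\<bar> * u" unfolding abs_mult
      by (rule mult_left_mono) (use assms in auto)
    ultimately show ?thesis using assms(1) by (simp add: algebra_simps)
  qed
  have "\<bar>(s - N * (1 + d)) / (D * (1 + d))\<bar> = \<bar>s - N * (1 + d)\<bar> / (\<bar>D\<bar> * (1 + d))"
    using d1 by (simp add: abs_mult)
  also have "\<dots> \<le> ((r + u) * \<bar>N\<bar>) / (\<bar>D\<bar> * (1/2))"
    apply (rule frac_le) using num assms d1 by auto
  also have "\<dots> = 2 * (r + u) * \<bar>N / D\<bar>" by (simp add: abs_divide)
  finally show ?thesis unfolding e .
qed

theorem corollary1:
  fixes n :: nat and t :: "nat \<Rightarrow> real" and f :: "real \<Rightarrow> real" and C0 :: real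
  assumes "n \<ge> 1"
    and "(\<forall>i j. 1 \<le> i \<longrightarrow> i < j \<longrightarrow> j \<le> n + 1 \<longrightarrow> t i < t j) \<or>
         (\<forall>i j. 1 \<le> i \<longrightarrow> i < j \<longrightarrow> j \<le> n + 1 \<longrightarrow> t i > t j)"
    and "\<forall>i. 1 \<le> i \<longrightarrow> i \<le> n \<longrightarrow> f (t i) * f (t (Suc i)) < 0"
    and "C0 \<ge> 0"
  shows "\<exists>C>0. \<exists>u0>0. \<forall>u fsub fdiv yv.
           0 \<le> u \<longrightarrow> u \<le> u0 \<longrightarrow>
           std_op u (-) fsub \<longrightarrow> std_op u (/) fdiv \<longrightarrow>
           (\<forall>i. 1 \<le> i \<longrightarrow> i \<le> n + 1 \<longrightarrow> \<bar>yv i - f (t i)\<bar> \<le> C0 * u * \<bar>f (t i)\<bar>) \<longrightarrow>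
           (\<forall>k i. k \<le> n \<longrightarrow> 1 \<le> i \<longrightarrow> i + k \<le> n + 1 \<longrightarrow>
              \<bar>fl_divdiff fsub fdiv t yv k i - divdiff t (\<lambda>j. f (t j)) k i\<bar>
                \<le> C * u * \<bar>divdiff t (\<lambda>j. f (t j)) k i\<bar>)"
proof -
  define y where "y = (\<lambda>j. f (t j))"
  define d where "d = divdiff t y"
  have den: "(t (i + Suc k) - t i) * (t (Suc i + Suc k) - t (Suc i)) > 0"
    if "1 \<le> i" "Suc i + Suc k \<le> n + 1" for i k
    using assms(2) that
  proof (elim disjE)
    assume h: "\<forall>i j. 1 \<le> i \<longrightarrow> i < j \<longrightarrow> j \<le> n + 1 \<longrightarrow> t i < t j"
    have "t (i + Suc k) - t i > 0" "t (Suc i + Suc k) - t (Suc i) > 0" using h that by auto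
    then show ?thesis by simp
  next
    assume h: "\<forall>i j. 1 \<le> i \<longrightarrow> i < j \<longrightarrow> j \<le> n + 1 \<longrightarrow> t i > t j"
    have "t (i + Suc k) - t i < 0" "t (Suc i + Suc k) - t (Suc i) < 0" using h that by auto
    then show ?thesis by (simp add: mult_neg_neg)
  qed
  have den0: "t (i + Suc k) - t i \<noteq> 0" if "1 \<le> i" "i + Suc k \<le> n + 1" for i k
  proof -
    have "t i \<noteq> t (i + Suc k)" using assms(2) that
    proof (elim disjE)
      assume h: "\<forall>i j. 1 \<le> i \<longrightarrow> i < j \<longrightarrow> j \<le> n + 1 \<longrightarrow> t i < t j"
      show ?thesis using h[rule_format, of i "i + Suc k"] that by auto
    next
      assume h: "\<forall>i j. 1 \<le> i \<longrightarrow> i < j \<longrightarrow> j \<le> n + 1 \<longrightarrow> t i > t j"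
      show ?thesis using h[rule_format, of i "i + Suc k"] that by auto
    qed
    then show ?thesis by simp
  qed
  have sgn: "(\<forall>i. 1 \<le> i \<longrightarrow> i + k \<le> n + 1 \<longrightarrow> d k i \<noteq> 0) \<and>
             (\<forall>i. 1 \<le> i \<longrightarrow> Suc (i + k) \<le> n + 1 \<longrightarrow> d k i * d k (Suc i) < 0)" for k
  proof (induction k)
    case 0
    show ?case
    proof (intro conjI allI impI)
      fix i assume i: "1 \<le> i" "i + 0 \<le> n + 1"
      show "d 0 i \<noteq> 0"
      proof (cases "i \<le> n")
        case True then show ?thesis using assms(3) i by (auto simp: d_def y_def)
      next
        case False
        then have "i - 1 \<ge> 1" "i - 1 \<le> n" "Suc (i - 1) = i" using i assms(1) by auto
        then show ?thesis using assms(3) by (auto simp: d_def y_def)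
      qed
    next
      fix i assume "1 \<le> i" "Suc (i + 0) \<le> n + 1"
      then show "d 0 i * d 0 (Suc i) < 0" using assms(3) by (auto simp: d_def y_def)
    qed
  next
    case (Suc k)
    have rec: "d (Suc k) i = (d k (Suc i) - d k i) / (t (i + Suc k) - t i)" for i
      by (simp add: d_def)
    show ?case
    proof (intro conjI allI impI)
      fix i assume i: "1 \<le> i" "i + Suc k \<le> n + 1"
      have "d k i * d k (Suc i) < 0" using Suc.IH i by auto
      then have "d k (Suc i) - d k i \<noteq> 0" by auto
      then show "d (Suc k) i \<noteq> 0" unfolding rec using den0[OF i] by simp
    next
      fix i assume i: "1 \<le> i" "Suc (i + Suc k) \<le> n + 1"
      have a: "d k i * d k (Suc i) < 0" "d k (Suc i) * d k (Suc (Suc i)) < 0"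
        using Suc.IH i by auto
      have N: "(d k (Suc i) - d k i) * (d k (Suc (Suc i)) - d k (Suc i)) < 0"
        by (rule opp_chain[OF a])
      have D: "(t (i + Suc k) - t i) * (t (Suc i + Suc k) - t (Suc i)) > 0"
        using den[of i k] i by simp
      have "d (Suc k) i * d (Suc k) (Suc i) =
        ((d k (Suc i) - d k i) * (d k (Suc (Suc i)) - d k (Suc i))) /
        ((t (i + Suc k) - t i) * (t (Suc i + Suc k) - t (Suc i)))"
        unfolding rec by simp
      also have "\<dots> < 0" using N D by (simp add: divide_neg_pos)
      finally show "d (Suc k) i * d (Suc k) (Suc i) < 0" .
    qed
  qed
  define C where "C = 9 ^ n * (C0 + 8)"
  show ?thesis
  proof (rule exI[of _ C], rule conjI, unfold C_def)
    show "9 ^ n * (C0 + 8) > (0::real)" using assms(4) by simp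
  next
    show "\<exists>u0>0. \<forall>u fsub fdiv yv.
           0 \<le> u \<longrightarrow> u \<le> u0 \<longrightarrow>
           std_op u (-) fsub \<longrightarrow> std_op u (/) fdiv \<longrightarrow>
           (\<forall>i. 1 \<le> i \<longrightarrow> i \<le> n + 1 \<longrightarrow> \<bar>yv i - f (t i)\<bar> \<le> C0 * u * \<bar>f (t i)\<bar>) \<longrightarrow>
           (\<forall>k i. k \<le> n \<longrightarrow> 1 \<le> i \<longrightarrow> i + k \<le> n + 1 \<longrightarrow>
              \<bar>fl_divdiff fsub fdiv t yv k i - divdiff t (\<lambda>j. f (t j)) k i\<bar>
                \<le> 9 ^ n * (C0 + 8) * u * \<bar>divdiff t (\<lambda>j. f (t j)) k i\<bar>)"
  proof (rule exI[of _ "1/2::real"], rule conjI, simp, intro allI impI)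
    fix u fsub fdiv yv k i
    assume u: "0 \<le> u" "u \<le> (1/2::real)" and fs: "std_op u (-) fsub" and fd: "std_op u (/) fdiv"
      and yv: "\<forall>i. 1 \<le> i \<longrightarrow> i \<le> n + 1 \<longrightarrow> \<bar>yv i - f (t i)\<bar> \<le> C0 * u * \<bar>f (t i)\<bar>"
      and ki: "k \<le> n" "1 \<le> i" "i + k \<le> n + 1"
    let ?F = "fl_divdiff fsub fdiv t yv"
    have main: "\<forall>i. 1 \<le> i \<longrightarrow> i + k \<le> n + 1 \<longrightarrow>
        \<bar>?F k i - d k i\<bar> \<le> (9 ^ k * (C0 + 8)) * u * \<bar>d k i\<bar>" for k
    proof (induction k)
      case 0
      show ?case
      proof (intro allI impI)
        fix i assume "1 \<le> i" "i + 0 \<le> n + 1"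
        then have "\<bar>yv i - f (t i)\<bar> \<le> C0 * u * \<bar>f (t i)\<bar>" using yv by auto
        also have "\<dots> \<le> (C0 + 8) * u * \<bar>f (t i)\<bar>"
          using u by (intro mult_right_mono) auto
        finally show "\<bar>?F 0 i - d 0 i\<bar> \<le> (9 ^ 0 * (C0 + 8)) * u * \<bar>d 0 i\<bar>"
          by (simp add: d_def y_def)
      qed
    next
      case (Suc k)
      show ?case
      proof (intro allI impI)
        fix i assume i: "1 \<le> i" "i + Suc k \<le> n + 1"
        define E where "E = 9 ^ k * (C0 + 8)"
        have E8: "E \<ge> 8" unfolding E_def using assms(4)
          by (smt (verit, best) mult_le_cancel_right1 one_le_power)
        have opp: "d k (Suc i) * d k i < 0" using sgn[of k] i by (auto simp: mult.commute)
        have e1: "\<bar>?F k (Suc i) - d k (Suc i)\<bar> \<le> (E * u) * \<bar>d k (Suc i)\<bar>"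
          using Suc.IH i unfolding E_def by auto
        have e2: "\<bar>?F k i - d k i\<bar> \<le> (E * u) * \<bar>d k i\<bar>"
          using Suc.IH i unfolding E_def by auto
        define N where "N = d k (Suc i) - d k i"
        define D where "D = t (i + Suc k) - t i"
        have D0: "D \<noteq> 0" unfolding D_def using den0[OF i] .
        have s1: "\<bar>(?F k (Suc i) - ?F k i) - N\<bar> \<le> (E * u) * \<bar>N\<bar>"
          unfolding N_def by (rule sub_err[OF opp e1 e2])
        obtain d1 where d1: "\<bar>d1\<bar> \<le> u" "fsub (?F k (Suc i)) (?F k i) = (?F k (Suc i) - ?F k i) * (1 + d1)"
          using fs unfolding std_op_def by blast
        obtain d2 where d2: "\<bar>d2\<bar> \<le> u" "fsub (t (i + Suc k)) (t i) = D * (1 + d2)"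
          using fs unfolding std_op_def D_def by blast
        define s where "s = fsub (?F k (Suc i)) (?F k i)"
        obtain d3 where d3: "\<bar>d3\<bar> \<le> u" "fdiv s (D * (1 + d2)) = s / (D * (1 + d2)) * (1 + d3)"
          using fd unfolding std_op_def by blast
        have s2: "\<bar>s - N\<bar> \<le> (E * u * (1 + u) + u) * \<bar>N\<bar>"
          unfolding s_def d1(2) by (rule round_err[OF s1 d1(1)])
        have s3: "\<bar>s / (D * (1 + d2)) - N / D\<bar> \<le> 2 * ((E * u * (1 + u) + u) + u) * \<bar>N / D\<bar>"
          by (rule div_err[OF s2 D0 d2(1) u(2)])
        have s4: "\<bar>s / (D * (1 + d2)) * (1 + d3) - N / D\<bar>
           \<le> (2 * ((E * u * (1 + u) + u) + u) * (1 + u) + u) * \<bar>N / D\<bar>"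
          by (rule round_err[OF s3 d3(1)])
        have Fe: "?F (Suc k) i = s / (D * (1 + d2)) * (1 + d3)"
          using d2 d3 by (simp add: s_def D_def)
        have de: "d (Suc k) i = N / D" by (simp add: d_def N_def D_def)
        have coef: "2 * ((E * u * (1 + u) + u) + u) * (1 + u) + u \<le> (9 ^ Suc k * (C0 + 8)) * u"
        proof -
          have "E * u * u \<le> E * u * (1/2)" using u E8 by (intro mult_left_mono) auto
          moreover have "u * u \<le> u * (1/2)" using u by (intro mult_left_mono) auto
          moreover have "E * u * u * u \<le> E * u * u * (1/2)" using u E8
            by (intro mult_left_mono) auto
          moreover have "0 \<le> E * u" using u E8 by simp
          moreover have "8 * u \<le> E * u" using u E8 by (intro mult_right_mono) auto
          moreover have "(9 ^ Suc k * (C0 + 8)) * u = 9 * (E * u)" unfolding E_def by simp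
          ultimately show ?thesis by (simp add: algebra_simps)
        qed
        show "\<bar>?F (Suc k) i - d (Suc k) i\<bar> \<le> (9 ^ Suc k * (C0 + 8)) * u * \<bar>d (Suc k) i\<bar>"
          unfolding Fe de using s4 coef by (meson abs_ge_zero mult_right_mono order_trans)
      qed
    qed
    have "\<bar>?F k i - d k i\<bar> \<le> (9 ^ k * (C0 + 8)) * u * \<bar>d k i\<bar>" using main ki by auto
    also have "\<dots> \<le> C * u * \<bar>d k i\<bar>" unfolding C_def using ki(1) u assms(4)
      by (intro mult_right_mono power_increasing) auto
    finally show "\<bar>?F k i - divdiff t (\<lambda>j. f (t j)) k i\<bar> \<le> 9 ^ n * (C0 + 8) * u * \<bar>divdiff t (\<lambda>j. f (t j)) k i\<bar>"
      unfolding C_def by (simp add: d_def y_def)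
  qed
  qed
qed

end
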